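(* Let $G$ be a finite graph and let $k$ be an integer with $k>\chi(G)$. Then $G$ is determined up to isomorphism by the recolouring graph $\mathcal{C}_k(G)$, even without knowing the value of $k$: if $G'$ is another finite graph and $k'>\chi(G')$ is an integer with $\mathcal{C}_k(G)\cong\mathcal{C}_{k'}(G')$, then $G\cong G'$.
   Context: All graphs are finite and simple. For a positive integer $k$, a (proper) $k$-colouring of $G$ is a map $c:V(G)\to\{1,\dots,k\}$ with $c(u)\neq c(v)$ for every edge $uv$; $\chi(G)$ is the least $k$ for which a $k$-colouring exists. The $k$-recolouring graph $\mathcal{C}_k(G)$ is the graph whose vertices are all $k$-colourings of $G$, two colourings being adjacent if and only if they differ at exactly one vertex of $G$. *)

theory Defs
  imports "HOL-Library.FuncSet"
begin

definition simple_graph :: "'a set \<Rightarrow> 'a set set \<Rightarrow> bool" where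
  "simple_graph V E \<longleftrightarrow> finite V \<and> (\<forall>e\<in>E. e \<subseteq> V \<and> card e = 2)"

definition is_colouring :: "'a set \<Rightarrow> 'a set set \<Rightarrow> nat \<Rightarrow> ('a \<Rightarrow> nat) \<Rightarrow> bool" where
  "is_colouring V E k c \<longleftrightarrow>
     c \<in> V \<rightarrow>\<^sub>E {1..k} \<and> (\<forall>u\<in>V. \<forall>v\<in>V. {u, v} \<in> E \<longrightarrow> c u \<noteq> c v)"

definition colourings :: "'a set \<Rightarrow> 'a set set \<Rightarrow> nat \<Rightarrow> ('a \<Rightarrow> nat) set" where
  "colourings V E k = {c. is_colouring V E k c}"

definition chromatic_number :: "'a set \<Rightarrow> 'a set set \<Rightarrow> nat" where
  "chromatic_number V E = (LEAST k. \<exists>c. is_colouring V E k c)"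

definition recolouring_edges :: "'a set \<Rightarrow> 'a set set \<Rightarrow> nat \<Rightarrow> ('a \<Rightarrow> nat) set set" where
  "recolouring_edges V E k =
     {{c, d} | c d. c \<in> colourings V E k \<and> d \<in> colourings V E k \<and>
                   card {v\<in>V. c v \<noteq> d v} = 1}"

definition graph_iso :: "'a set \<Rightarrow> 'a set set \<Rightarrow> 'b set \<Rightarrow> 'b set set \<Rightarrow> bool" where
  "graph_iso V E V' E' \<longleftrightarrow>
     (\<exists>f. bij_betw f V V' \<and> (\<forall>u\<in>V. \<forall>v\<in>V. {u, v} \<in> E \<longleftrightarrow> {f u, f v} \<in> E'))"

end

theory Submission
  imports Defs
begin

definition dif :: "'a set \<Rightarrow> ('a \<Rightarrow> nat) \<Rightarrow> ('a \<Rightarrow> nat) \<Rightarrow> 'a set" where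
  "dif V c d = {v\<in>V. c v \<noteq> d v}"

lemma dif_sym: "dif V c d = dif V d c"
  unfolding dif_def by auto

lemma adj_iff:
  "{c,d} \<in> recolouring_edges V E k \<longleftrightarrow>
     c \<in> colourings V E k \<and> d \<in> colourings V E k \<and> card (dif V c d) = 1"
proof
  assume "{c,d} \<in> recolouring_edges V E k"
  then obtain c' d' where h: "{c,d} = {c',d'}" "c' \<in> colourings V E k" "d' \<in> colourings V E k"
    "card {v\<in>V. c' v \<noteq> d' v} = 1"
    unfolding recolouring_edges_def by blast
  from h(1) have "(c = c' \<and> d = d') \<or> (c = d' \<and> d = c')" by (simp add: doubleton_eq_iff)
  then show "c \<in> colourings V E k \<and> d \<in> colourings V E k \<and> card (dif V c d) = 1"
     (is ?thesis)
  proof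
    assume "c = c' \<and> d = d'" then show ?thesis using h unfolding dif_def by simp
  next
    assume "c = d' \<and> d = c'" then show ?thesis using h dif_sym[of V c d] unfolding dif_def by simp
  qed
next
  assume "c \<in> colourings V E k \<and> d \<in> colourings V E k \<and> card (dif V c d) = 1"
  then have "\<exists>c' d'. {c,d} = {c',d'} \<and> c' \<in> colourings V E k \<and> d' \<in> colourings V E k \<and>
                   card {v\<in>V. c' v \<noteq> d' v} = 1" unfolding dif_def by blast
  then show "{c,d} \<in> recolouring_edges V E k"
    unfolding recolouring_edges_def by (simp only: mem_Collect_eq)
qed

lemma col_ext:
  assumes "c \<in> colourings V E k" "d \<in> colourings V E k" "\<And>x. x \<in> V \<Longrightarrow> c x = d x"
  shows "c = d"
  using assms unfolding colourings_def is_colouring_def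
  unfolding PiE_iff by (blast intro: extensionalityI)

lemma dif_single:
  assumes "dif V c d = {u}" "x \<in> V" "x \<noteq> u"
  shows "d x = c x"
proof -
  have "x \<notin> dif V c d" using assms by blast
  then show ?thesis using assms(2) unfolding dif_def by simp
qed

lemma same_label_adj:
  assumes "c \<in> colourings V E k" "d \<in> colourings V E k" "e \<in> colourings V E k"
    "dif V c d = {u}" "dif V c e = {u}" "d \<noteq> e"
  shows "{d,e} \<in> recolouring_edges V E k"
proof -
  have uV: "u \<in> V" using assms(4) unfolding dif_def by auto
  have hd: "\<And>x. x \<in> V \<Longrightarrow> x \<noteq> u \<Longrightarrow> d x = c x" using dif_single[OF assms(4)] by blast
  have he: "\<And>x. x \<in> V \<Longrightarrow> x \<noteq> u \<Longrightarrow> e x = c x" using dif_single[OF assms(5)] by blast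
  have ne: "d u \<noteq> e u"
  proof
    assume eq: "d u = e u"
    have "\<And>x. x \<in> V \<Longrightarrow> d x = e x"
    proof -
      fix x assume "x \<in> V"
      then show "d x = e x" using eq hd[of x] he[of x] by (cases "x = u") simp_all
    qed
    then have "d = e" using col_ext[OF assms(2) assms(3)] by blast
    then show False using assms(6) by simp
  qed
  have "dif V d e = {u}"
  proof (intro set_eqI iffI)
    fix x assume "x \<in> dif V d e"
    then have "x \<in> V" "d x \<noteq> e x" unfolding dif_def by auto
    then show "x \<in> {u}" using hd[of x] he[of x] by (cases "x = u") simp_all
  next
    fix x assume "x \<in> {u}"
    then show "x \<in> dif V d e" using ne uV unfolding dif_def by simp
  qed
  then have "card (dif V d e) = 1" by simp
  then show ?thesis unfolding adj_iff using assms(2,3) by blast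
qed

lemma common_nb:
  assumes sg: "simple_graph V E"
    and cC: "c \<in> colourings V E k" and dC: "d \<in> colourings V E k" and eC: "e \<in> colourings V E k"
    and du: "dif V c d = {u}" and ev: "dif V c e = {v}" and uv: "u \<noteq> v" and nE: "{u,v} \<notin> E"
  shows "\<exists>f. f \<noteq> c \<and> {d,f} \<in> recolouring_edges V E k \<and> {e,f} \<in> recolouring_edges V E k"
proof -
  have uV: "u \<in> V" and vV: "v \<in> V" and cdu: "c u \<noteq> d u" and cev: "c v \<noteq> e v"
    using du ev unfolding dif_def by auto
  have hd: "\<forall>x\<in>V. x \<noteq> u \<longrightarrow> d x = c x" using dif_single[OF du] by blast
  have he: "\<forall>x\<in>V. x \<noteq> v \<longrightarrow> e x = c x" using dif_single[OF ev] by blast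
  have single: "\<And>x. {x} \<notin> E" using sg unfolding simple_graph_def by fastforce
  define f where "f = c(u := d u, v := e v)"
  have cP: "c \<in> V \<rightarrow>\<^sub>E {1..k}" and dP: "d \<in> V \<rightarrow>\<^sub>E {1..k}" and eP: "e \<in> V \<rightarrow>\<^sub>E {1..k}"
    using cC dC eC unfolding colourings_def is_colouring_def by auto
  have cp: "\<forall>x\<in>V. \<forall>y\<in>V. {x, y} \<in> E \<longrightarrow> c x \<noteq> c y"
   and dp: "\<forall>x\<in>V. \<forall>y\<in>V. {x, y} \<in> E \<longrightarrow> d x \<noteq> d y"
   and ep: "\<forall>x\<in>V. \<forall>y\<in>V. {x, y} \<in> E \<longrightarrow> e x \<noteq> e y"
    using cC dC eC unfolding colourings_def is_colouring_def by auto
  have fP: "f \<in> V \<rightarrow>\<^sub>E {1..k}"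
    using cP dP eP uV vV unfolding f_def PiE_iff extensional_def by auto
  have fp: "\<forall>x\<in>V. \<forall>y\<in>V. {x, y} \<in> E \<longrightarrow> f x \<noteq> f y"
  proof (intro ballI impI)
    fix x y assume xV: "x \<in> V" and yV: "y \<in> V" and xy: "{x,y} \<in> E"
    have "x \<noteq> y" using xy single by auto
    moreover have "{y,x} \<in> E" using xy by (simp add: insert_commute)
    note yx = this
    show "f x \<noteq> f y"
    proof (cases "x = u")
      case True
      then have "y \<noteq> v" using xy nE by auto
      then show ?thesis using True \<open>x \<noteq> y\<close> xV yV xy uv hd[rule_format, of y] dp[rule_format, of x y] unfolding f_def by auto
    next
      case xu: False
      show ?thesis
      proof (cases "x = v")
        case True
        then have "y \<noteq> u" using yx nE by auto
        then show ?thesis using True \<open>x \<noteq> y\<close> xV yV xy uv he[rule_format, of y] ep[rule_format, of x y] unfolding f_def by auto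
      next
        case xv: False
        show ?thesis
        proof (cases "y = u")
          case True
          then show ?thesis using xu xv xV yV xy uv hd[rule_format, of x] dp[rule_format, of x y] unfolding f_def by auto
        next
          case yu: False
          show ?thesis
          proof (cases "y = v")
            case True
            then show ?thesis using xu xv yu xV yV xy uv he[rule_format, of x] ep[rule_format, of x y] unfolding f_def by auto
          next
            case False
            then show ?thesis using xu xv yu xV yV xy cp[rule_format, of x y] unfolding f_def by auto
          qed
        qed
      qed
    qed
  qed
  have fC: "f \<in> colourings V E k" using fP fp unfolding colourings_def is_colouring_def by auto
  have "f \<noteq> c" using cdu uv unfolding f_def by (metis fun_upd_other fun_upd_same)
  moreover have "dif V d f = {v}" using uv vV cev hd unfolding dif_def f_def by auto
  moreover have "dif V e f = {u}" using uv uV cdu he unfolding dif_def f_def by auto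
  ultimately show ?thesis unfolding adj_iff using dC eC fC
    by (intro exI[of _ f]) simp
qed

lemma lemmaB:
  assumes sg: "simple_graph V E" and c0C: "c0 \<in> colourings V E k" and small: "\<forall>x\<in>V. c0 x < k"
    and uV: "u \<in> V" and vV: "v \<in> V" and uvE: "{u,v} \<in> E"
    and a1: "{c0(u := k), f} \<in> recolouring_edges V E k"
    and a2: "{c0(v := k), f} \<in> recolouring_edges V E k"
  shows "f = c0"
proof -
  have uv: "u \<noteq> v" using uvE sg unfolding simple_graph_def by fastforce
  have fC: "f \<in> colourings V E k" and c1: "card (dif V (c0(u := k)) f) = 1"
    and c2: "card (dif V (c0(v := k)) f) = 1"
    using adj_iff[THEN iffD1, OF a1] adj_iff[THEN iffD1, OF a2] by simp_all
  obtain x where hx: "dif V (c0(u := k)) f = {x}" using card_1_singleton_iff[THEN iffD1, of "dif V (c0(u := k)) f"] c1 by (simp, blast)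
  obtain y where hy: "dif V (c0(v := k)) f = {y}" using card_1_singleton_iff[THEN iffD1, of "dif V (c0(v := k)) f"] c2 by (simp, blast)
  have ex: "\<And>w. w \<in> V \<Longrightarrow> w \<noteq> x \<Longrightarrow> f w = (c0(u := k)) w" using dif_single[OF hx] by blast
  have ey: "\<And>w. w \<in> V \<Longrightarrow> w \<noteq> y \<Longrightarrow> f w = (c0(v := k)) w" using dif_single[OF hy] by blast
  have ku: "c0 u \<noteq> k" and kv: "c0 v \<noteq> k" using small uV vV by auto
  have u_xy: "x = u \<or> y = u"
  proof (rule ccontr)
    assume "\<not> (x = u \<or> y = u)"
    then show False using ex[OF uV] ey[OF uV] uv ku by auto
  qed
  have v_xy: "x = v \<or> y = v"
  proof (rule ccontr)
    assume "\<not> (x = v \<or> y = v)"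
    then show False using ex[OF vV] ey[OF vV] uv kv by auto
  qed
  show ?thesis
  proof (cases "x = u")
    case True
    then have yv: "y = v" using v_xy uv by auto
    have "\<And>w. w \<in> V \<Longrightarrow> f w = c0 w"
    proof -
      fix w assume wV: "w \<in> V"
      show "f w = c0 w"
      proof (cases "w = u")
        case True then show ?thesis using ey[OF wV] yv uv by auto
      next
        case False then show ?thesis using ex[OF wV] \<open>x = u\<close> by auto
      qed
    qed
    then show ?thesis using col_ext[OF fC c0C] by blast
  next
    case False
    then have yu: "y = u" and xv: "x = v" using u_xy v_xy uv by auto
    have "f u = k" using ex[OF uV] xv uv by auto
    moreover have "f v = k" using ey[OF vV] yu uv by auto
    moreover have "f u \<noteq> f v" using fC uV vV uvE unfolding colourings_def is_colouring_def by blast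
    ultimately show ?thesis by simp
  qed
qed

lemma exists_colouring:
  assumes sg: "simple_graph V E"
  shows "\<exists>k c. is_colouring V E k c"
proof -
  have fin: "finite V" using sg unfolding simple_graph_def by blast
  obtain h where h: "bij_betw h V {0..<card V}" using ex_bij_betw_finite_nat[OF fin] by blast
  define c where "c = (\<lambda>x. if x \<in> V then h x + 1 else undefined)"
  have hr: "\<forall>x\<in>V. h x < card V" using h unfolding bij_betw_def by auto
  have "c \<in> V \<rightarrow>\<^sub>E {1..card V}"
    using hr unfolding c_def bij_betw_def PiE_iff extensional_def by auto
  moreover have "\<forall>u\<in>V. \<forall>v\<in>V. {u, v} \<in> E \<longrightarrow> c u \<noteq> c v"
  proof (intro ballI impI)
    fix u v assume "u \<in> V" "v \<in> V" "{u,v} \<in> E"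
    moreover have "u \<noteq> v" using \<open>{u,v} \<in> E\<close> sg unfolding simple_graph_def by fastforce
    ultimately show "c u \<noteq> c v" using h unfolding c_def bij_betw_def inj_on_def by auto
  qed
  ultimately show ?thesis unfolding is_colouring_def by blast
qed

lemma small_colouring:
  assumes sg: "simple_graph V E" and k: "chromatic_number V E < k"
  shows "\<exists>c0. c0 \<in> colourings V E k \<and> (\<forall>x\<in>V. c0 x < k)"
proof -
  have "\<exists>c. is_colouring V E (LEAST k. \<exists>c. is_colouring V E k c) c"
    using exists_colouring[OF sg] by (rule LeastI_ex)
  then obtain c where c: "is_colouring V E (chromatic_number V E) c"
    unfolding chromatic_number_def by blast
  have "c \<in> V \<rightarrow>\<^sub>E {1..chromatic_number V E}" using c unfolding is_colouring_def by blast
  then have "c \<in> V \<rightarrow>\<^sub>E {1..k}" and "\<forall>x\<in>V. c x < k" using k unfolding PiE_iff by force+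
  then show ?thesis using c unfolding colourings_def is_colouring_def by blast
qed

lemma graph_iso_sym:
  assumes "graph_iso V E V' E'"
  shows "graph_iso V' E' V E"
proof -
  obtain f where bij: "bij_betw f V V'" and pres: "\<forall>u\<in>V. \<forall>v\<in>V. {u, v} \<in> E \<longleftrightarrow> {f u, f v} \<in> E'"
    using assms unfolding graph_iso_def by blast
  define g where "g = inv_into V f"
  have bg: "bij_betw g V' V" using bij_betw_inv_into[OF bij] unfolding g_def .
  have fg: "\<And>x. x \<in> V' \<Longrightarrow> f (g x) = x"
    using bij unfolding g_def bij_betw_def by (simp add: f_inv_into_f)
  have gV: "\<And>x. x \<in> V' \<Longrightarrow> g x \<in> V" using bg unfolding bij_betw_def by blast
  have "\<forall>u\<in>V'. \<forall>v\<in>V'. {u, v} \<in> E' \<longleftrightarrow> {g u, g v} \<in> E"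
  proof (intro ballI)
    fix u v assume "u \<in> V'" "v \<in> V'"
    then show "{u, v} \<in> E' \<longleftrightarrow> {g u, g v} \<in> E"
      using pres gV[of u] gV[of v] fg[of u] fg[of v] by metis
  qed
  then show ?thesis using bg unfolding graph_iso_def by blast
qed

lemma embed:
  assumes sg: "simple_graph V E" and sg': "simple_graph V' E'" and k: "chromatic_number V E < k"
    and iso: "graph_iso (colourings V E k) (recolouring_edges V E k)
                   (colourings V' E' k') (recolouring_edges V' E' k')"
  shows "\<exists>F. inj_on F V \<and> F ` V \<subseteq> V' \<and> (\<forall>u\<in>V. \<forall>v\<in>V. {u,v} \<in> E \<longrightarrow> {F u, F v} \<in> E')"
proof -
  obtain c0 where c0C: "c0 \<in> colourings V E k" and small: "\<forall>x\<in>V. c0 x < k"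
    using small_colouring[OF sg k] by blast
  obtain \<phi> where bij: "bij_betw \<phi> (colourings V E k) (colourings V' E' k')"
    and pres: "\<forall>a\<in>colourings V E k. \<forall>b\<in>colourings V E k.
        {a, b} \<in> recolouring_edges V E k \<longleftrightarrow> {\<phi> a, \<phi> b} \<in> recolouring_edges V' E' k'"
    using iso unfolding graph_iso_def by blast
  have single: "\<And>x. {x} \<notin> E" using sg unfolding simple_graph_def by fastforce
  have presI: "\<And>a b. a \<in> colourings V E k \<Longrightarrow> b \<in> colourings V E k \<Longrightarrow>
        {a, b} \<in> recolouring_edges V E k \<longleftrightarrow> {\<phi> a, \<phi> b} \<in> recolouring_edges V' E' k'"
    using pres by blast
  define d where "d = (\<lambda>v. c0(v := k))"
  have c0P: "c0 \<in> V \<rightarrow>\<^sub>E {1..k}" and c0p: "\<forall>x\<in>V. \<forall>y\<in>V. {x, y} \<in> E \<longrightarrow> c0 x \<noteq> c0 y"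
    using c0C unfolding colourings_def is_colouring_def by auto
  have k1: "1 \<le> k" using k by simp
  have dC: "d v \<in> colourings V E k" if vV: "v \<in> V" for v
  proof -
    have "d v \<in> V \<rightarrow>\<^sub>E {1..k}" using c0P vV k1 unfolding d_def PiE_iff extensional_def by auto
    moreover have "\<forall>x\<in>V. \<forall>y\<in>V. {x, y} \<in> E \<longrightarrow> d v x \<noteq> d v y"
    proof (intro ballI impI)
      fix x y assume xV: "x \<in> V" and yV: "y \<in> V" and xy: "{x,y} \<in> E"
      have "x \<noteq> y" using xy single by auto
      then show "d v x \<noteq> d v y" using xV yV xy c0p small unfolding d_def
        by (cases "x = v"; cases "y = v") auto
    qed
    ultimately show ?thesis unfolding colourings_def is_colouring_def by blast
  qed
  have dd: "dif V c0 (d v) = {v}" if vV: "v \<in> V" for v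
    using small vV unfolding dif_def d_def by auto
  have dadj: "{c0, d v} \<in> recolouring_edges V E k" if vV: "v \<in> V" for v
    unfolding adj_iff using c0C dC[OF vV] dd[OF vV] by simp
  have dnadj: "{d u, d v} \<notin> recolouring_edges V E k" if "u \<in> V" "v \<in> V" "u \<noteq> v" for u v
  proof -
    have "dif V (d u) (d v) = {u, v}" using that small unfolding dif_def d_def by auto
    then have "card (dif V (d u) (d v)) = 2" using that by simp
    then show ?thesis unfolding adj_iff by simp
  qed
  have dinj: "d u \<noteq> d v" if "u \<in> V" "v \<in> V" "u \<noteq> v" for u v
  proof
    assume "d u = d v"
    then have "d u u = d v u" by simp
    then show False using that small unfolding d_def by auto
  qed
  have \<phi>C: "\<phi> a \<in> colourings V' E' k'" if "a \<in> colourings V E k" for a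
    using bij that unfolding bij_betw_def by blast
  have \<phi>inj: "inj_on \<phi> (colourings V E k)" using bij unfolding bij_betw_def by blast
  have adj': "{\<phi> c0, \<phi> (d v)} \<in> recolouring_edges V' E' k'" if vV: "v \<in> V" for v
    using presI[OF c0C dC[OF vV]] dadj[OF vV] by simp
  define F where "F = (\<lambda>v. the_elem (dif V' (\<phi> c0) (\<phi> (d v))))"
  have Fd: "dif V' (\<phi> c0) (\<phi> (d v)) = {F v}" if vV: "v \<in> V" for v
  proof -
    have "card (dif V' (\<phi> c0) (\<phi> (d v))) = Suc 0" using adj'[OF vV] unfolding adj_iff by simp
    then obtain x where "dif V' (\<phi> c0) (\<phi> (d v)) = {x}"
      using card_1_singleton_iff[THEN iffD1, of "dif V' (\<phi> c0) (\<phi> (d v))"] by blast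
    then show ?thesis unfolding F_def by simp
  qed
  have FV: "F v \<in> V'" if vV: "v \<in> V" for v using Fd[OF vV] unfolding dif_def by blast
  have Finj: "inj_on F V"
  proof (rule inj_onI, rule ccontr)
    fix u v assume uV: "u \<in> V" and vV: "v \<in> V" and eq: "F u = F v" and uv: "u \<noteq> v"
    have ne: "\<phi> (d u) \<noteq> \<phi> (d v)" using \<phi>inj dC[OF uV] dC[OF vV] dinj[OF uV vV uv]
      unfolding inj_on_def by blast
    have "{\<phi> (d u), \<phi> (d v)} \<in> recolouring_edges V' E' k'"
      using same_label_adj[OF \<phi>C[OF c0C] \<phi>C[OF dC[OF uV]] \<phi>C[OF dC[OF vV]] Fd[OF uV]] Fd[OF vV] eq ne
      by simp
    then have "{d u, d v} \<in> recolouring_edges V E k" using presI[OF dC[OF uV] dC[OF vV]] by simp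
    then show False using dnadj[OF uV vV uv] by simp
  qed
  have Fe: "{F u, F v} \<in> E'" if uV: "u \<in> V" and vV: "v \<in> V" and uvE: "{u,v} \<in> E" for u v
  proof (rule ccontr)
    assume nE: "{F u, F v} \<notin> E'"
    have uv: "u \<noteq> v" using uvE single by auto
    then have Fuv: "F u \<noteq> F v" using Finj uV vV unfolding inj_on_def by blast
    obtain f' where f'1: "f' \<noteq> \<phi> c0" and f'2: "{\<phi> (d u), f'} \<in> recolouring_edges V' E' k'"
      and f'3: "{\<phi> (d v), f'} \<in> recolouring_edges V' E' k'"
      using common_nb[OF sg' \<phi>C[OF c0C] \<phi>C[OF dC[OF uV]] \<phi>C[OF dC[OF vV]] Fd[OF uV] Fd[OF vV] Fuv nE]
      by blast
    have f'C: "f' \<in> colourings V' E' k'" using f'2 unfolding adj_iff by simp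
    then obtain f where fC: "f \<in> colourings V E k" and ff: "f' = \<phi> f"
      using bij unfolding bij_betw_def by blast
    have "{d u, f} \<in> recolouring_edges V E k" using presI[OF dC[OF uV] fC] f'2 ff by simp
    moreover have "{d v, f} \<in> recolouring_edges V E k" using presI[OF dC[OF vV] fC] f'3 ff by simp
    ultimately have "f = c0" using lemmaB[OF sg c0C small uV vV uvE] unfolding d_def by blast
    then show False using f'1 ff by simp
  qed
  show ?thesis using Finj FV Fe by blast
qed

lemma edge_card_le:
  assumes sg: "simple_graph V E" and sg': "simple_graph V' E'"
    and inj: "inj_on F V" and FV: "F ` V \<subseteq> V'"
    and Fe: "\<forall>u\<in>V. \<forall>v\<in>V. {u,v} \<in> E \<longrightarrow> {F u, F v} \<in> E'"
  shows "inj_on (\<lambda>e. F ` e) E" and "(\<lambda>e. F ` e) ` E \<subseteq> E'" and "card E \<le> card E'"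
proof -
  have EV: "\<And>e. e \<in> E \<Longrightarrow> e \<subseteq> V" using sg unfolding simple_graph_def by blast
  show i: "inj_on (\<lambda>e. F ` e) E"
    using inj_on_image_eq_iff[OF inj] EV unfolding inj_on_def by blast
  show s: "(\<lambda>e. F ` e) ` E \<subseteq> E'"
  proof
    fix x assume "x \<in> (\<lambda>e. F ` e) ` E"
    then obtain e where eE: "e \<in> E" and x: "x = F ` e" by blast
    have "card e = 2" using eE sg unfolding simple_graph_def by blast
    then obtain a b where ab: "e = {a,b}" unfolding card_2_iff by blast
    have "a \<in> V" "b \<in> V" using EV[OF eE] ab by auto
    then show "x \<in> E'" using Fe eE ab x by simp
  qed
  have "finite E'" using sg' unfolding simple_graph_def
    by (meson PowI finite_Pow_iff finite_subset subsetI)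
  then show "card E \<le> card E'" using card_inj_on_le[OF i s] by blast
qed

lemma iso_from_embeddings:
  assumes sg: "simple_graph V E" and sg': "simple_graph V' E'"
    and inj: "inj_on F V" and FV: "F ` V \<subseteq> V'"
    and Fe: "\<forall>u\<in>V. \<forall>v\<in>V. {u,v} \<in> E \<longrightarrow> {F u, F v} \<in> E'"
    and inj': "inj_on G V'" and GV: "G ` V' \<subseteq> V"
    and Ge: "\<forall>u\<in>V'. \<forall>v\<in>V'. {u,v} \<in> E' \<longrightarrow> {G u, G v} \<in> E"
  shows "graph_iso V E V' E'"
proof -
  have fin: "finite V" and fin': "finite V'" using sg sg' unfolding simple_graph_def by auto
  have "card V \<le> card V'" using card_inj_on_le[OF inj FV fin'] .
  moreover have "card V' \<le> card V" using card_inj_on_le[OF inj' GV fin] .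
  ultimately have "card (F ` V) = card V'" using card_image[OF inj] by simp
  then have FV': "F ` V = V'" using card_subset_eq[OF fin' FV] by blast
  have bij: "bij_betw F V V'" using inj FV' unfolding bij_betw_def by blast
  have fE': "finite E'" using sg' fin' unfolding simple_graph_def
    by (meson PowI finite_Pow_iff finite_subset subsetI)
  note e1 = edge_card_le[OF sg sg' inj FV Fe]
  note e2 = edge_card_le[OF sg' sg inj' GV Ge]
  have "card ((\<lambda>e. F ` e) ` E) = card E'" using card_image[OF e1(1)] e1(3) e2(3) by simp
  then have imE: "(\<lambda>e. F ` e) ` E = E'" using card_subset_eq[OF fE' e1(2)] by blast
  have EV: "\<And>e. e \<in> E \<Longrightarrow> e \<subseteq> V" using sg unfolding simple_graph_def by blast
  have "\<forall>u\<in>V. \<forall>v\<in>V. {u, v} \<in> E \<longleftrightarrow> {F u, F v} \<in> E'"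
  proof (intro ballI iffI)
    fix u v assume "u \<in> V" "v \<in> V" "{u,v} \<in> E"
    then show "{F u, F v} \<in> E'" using Fe by blast
  next
    fix u v assume uV: "u \<in> V" and vV: "v \<in> V" and h: "{F u, F v} \<in> E'"
    then obtain e where eE: "e \<in> E" and ee: "F ` e = {F u, F v}" using imE by force
    have "F ` e = F ` {u, v}" using ee by simp
    moreover have "{u, v} \<subseteq> V" using uV vV by simp
    ultimately have "e = {u, v}" using inj_on_image_eq_iff[OF inj EV[OF eE]] by blast
    then show "{u, v} \<in> E" using eE by simp
  qed
  then show ?thesis using bij unfolding graph_iso_def by blast
qed

theorem theorem1p2:
  fixes V :: "'a set" and E :: "'a set set"
    and V' :: "'b set" and E' :: "'b set set"
    and k k' :: nat
  assumes "simple_graph V E" and "simple_graph V' E'"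
    and "k > chromatic_number V E" and "k' > chromatic_number V' E'"
    and "graph_iso (colourings V E k) (recolouring_edges V E k)
                   (colourings V' E' k') (recolouring_edges V' E' k')"
  shows "graph_iso V E V' E'"
proof -
  obtain F where F: "inj_on F V" "F ` V \<subseteq> V'" "\<forall>u\<in>V. \<forall>v\<in>V. {u,v} \<in> E \<longrightarrow> {F u, F v} \<in> E'"
    using embed[OF assms(1,2,3,5)] by blast
  obtain G where G: "inj_on G V'" "G ` V' \<subseteq> V" "\<forall>u\<in>V'. \<forall>v\<in>V'. {u,v} \<in> E' \<longrightarrow> {G u, G v} \<in> E"
    using embed[OF assms(2,1,4) graph_iso_sym[OF assms(5)]] by blast
  show ?thesis using iso_from_embeddings[OF assms(1,2) F G] .
qed

end
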